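(* Let $\mathbf{U}$ be a countable structure that has a universal homogeneous endomorphism. Then $\mathbf{U}$ is homogeneous if and only if $\mathbf{U}$ is homomorphism homogeneous.
   Context: An embedding is an injective homomorphism reflecting all relations. $\operatorname{Age}(\mathbf{U})$ is the class of finitely generated structures embeddable in $\mathbf{U}$, and $\overline{\operatorname{Age}(\mathbf{U})}$ is the class of countable structures all of whose finitely generated substructures embed into $\mathbf{U}$. A structure is homogeneous if every isomorphism between finitely generated substructures extends to an automorphism, and homomorphism homogeneous if every homomorphism between finitely generated substructures extends to an endomorphism. A universal homogeneous endomorphism of $\mathbf{U}$ is an endomorphism $u$ such that for every $\mathbf{A}\in\overline{\operatorname{Age}(\mathbf{U})}$ and homomorphism $h:\mathbf{A}\to\mathbf{U}$ there is an embedding $\iota:\mathbf{A}\hookrightarrow\mathbf{U}$ with $h=u\circ\iota$, and for every finitely generated $\mathbf{A}\le\mathbf{U}$ and embedding $\iota:\mathbf{A}\hookrightarrow\mathbf{U}$ with $u\circ\iota=u\restriction_A$ there is an automorphism $\alpha$ of $\mathbf{U}$ with $u\circ\alpha=u$ and $\alpha\restriction_A=\iota$. *)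

theory Defs
  imports Main "HOL-Library.Countable_Set"
begin

text \<open>First-order structures over a signature given by arity functions
  fa (function symbols 'f) and ra (relation symbols 'r).
  Tuples are lists; only tuples of the right length with entries in the carrier matter.\<close>

record ('a, 'f, 'r) struct =
  carrier :: "'a set"
  fun_of :: "'f \<Rightarrow> 'a list \<Rightarrow> 'a"
  rel_of :: "'r \<Rightarrow> 'a list \<Rightarrow> bool"

definition tuples :: "'a set \<Rightarrow> nat \<Rightarrow> 'a list set" where
  "tuples S n = {xs. length xs = n \<and> set xs \<subseteq> S}"

definition closed_under :: "('f \<Rightarrow> nat) \<Rightarrow> ('a, 'f, 'r) struct \<Rightarrow> 'a set \<Rightarrow> bool" where
  "closed_under fa U C \<longleftrightarrow> (\<forall>f. \<forall>xs \<in> tuples C (fa f). fun_of U f xs \<in> C)"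

definition is_struct :: "('f \<Rightarrow> nat) \<Rightarrow> ('r \<Rightarrow> nat) \<Rightarrow> ('a, 'f, 'r) struct \<Rightarrow> bool" where
  "is_struct fa ra A \<longleftrightarrow> closed_under fa A (carrier A)"

definition is_hom :: "('f \<Rightarrow> nat) \<Rightarrow> ('r \<Rightarrow> nat) \<Rightarrow> ('a, 'f, 'r) struct \<Rightarrow> ('b, 'f, 'r) struct
    \<Rightarrow> ('a \<Rightarrow> 'b) \<Rightarrow> bool" where
  "is_hom fa ra A B h \<longleftrightarrow>
     (\<forall>x \<in> carrier A. h x \<in> carrier B) \<and>
     (\<forall>f. \<forall>xs \<in> tuples (carrier A) (fa f). h (fun_of A f xs) = fun_of B f (map h xs)) \<and>
     (\<forall>r. \<forall>xs \<in> tuples (carrier A) (ra r). rel_of A r xs \<longrightarrow> rel_of B r (map h xs))"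

definition is_emb :: "('f \<Rightarrow> nat) \<Rightarrow> ('r \<Rightarrow> nat) \<Rightarrow> ('a, 'f, 'r) struct \<Rightarrow> ('b, 'f, 'r) struct
    \<Rightarrow> ('a \<Rightarrow> 'b) \<Rightarrow> bool" where
  "is_emb fa ra A B h \<longleftrightarrow> is_hom fa ra A B h \<and> inj_on h (carrier A) \<and>
     (\<forall>r. \<forall>xs \<in> tuples (carrier A) (ra r). rel_of B r (map h xs) \<longrightarrow> rel_of A r xs)"

definition is_iso :: "('f \<Rightarrow> nat) \<Rightarrow> ('r \<Rightarrow> nat) \<Rightarrow> ('a, 'f, 'r) struct \<Rightarrow> ('b, 'f, 'r) struct
    \<Rightarrow> ('a \<Rightarrow> 'b) \<Rightarrow> bool" where
  "is_iso fa ra A B h \<longleftrightarrow> is_emb fa ra A B h \<and> h ` carrier A = carrier B"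

definition is_endo :: "('f \<Rightarrow> nat) \<Rightarrow> ('r \<Rightarrow> nat) \<Rightarrow> ('a, 'f, 'r) struct \<Rightarrow> ('a \<Rightarrow> 'a) \<Rightarrow> bool" where
  "is_endo fa ra U h \<longleftrightarrow> is_hom fa ra U U h"

definition is_aut :: "('f \<Rightarrow> nat) \<Rightarrow> ('r \<Rightarrow> nat) \<Rightarrow> ('a, 'f, 'r) struct \<Rightarrow> ('a \<Rightarrow> 'a) \<Rightarrow> bool" where
  "is_aut fa ra U h \<longleftrightarrow> is_iso fa ra U U h"

definition substructure :: "('f \<Rightarrow> nat) \<Rightarrow> ('r \<Rightarrow> nat) \<Rightarrow> ('a, 'f, 'r) struct \<Rightarrow> ('a, 'f, 'r) struct \<Rightarrow> bool" where
  "substructure fa ra A U \<longleftrightarrow> carrier A \<subseteq> carrier U \<and> closed_under fa U (carrier A) \<and>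
     (\<forall>f. \<forall>xs \<in> tuples (carrier A) (fa f). fun_of A f xs = fun_of U f xs) \<and>
     (\<forall>r. \<forall>xs \<in> tuples (carrier A) (ra r). rel_of A r xs = rel_of U r xs)"

definition generated :: "('f \<Rightarrow> nat) \<Rightarrow> ('a, 'f, 'r) struct \<Rightarrow> 'a set \<Rightarrow> 'a set" where
  "generated fa A S = \<Inter>{C. S \<subseteq> C \<and> C \<subseteq> carrier A \<and> closed_under fa A C}"

definition fin_gen :: "('f \<Rightarrow> nat) \<Rightarrow> ('a, 'f, 'r) struct \<Rightarrow> bool" where
  "fin_gen fa A \<longleftrightarrow> (\<exists>S. finite S \<and> S \<subseteq> carrier A \<and> generated fa A S = carrier A)"

definition in_age :: "('f \<Rightarrow> nat) \<Rightarrow> ('r \<Rightarrow> nat) \<Rightarrow> ('a, 'f, 'r) struct \<Rightarrow> ('b, 'f, 'r) struct \<Rightarrow> bool" where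
  "in_age fa ra U B \<longleftrightarrow> is_struct fa ra B \<and> fin_gen fa B \<and> (\<exists>e. is_emb fa ra B U e)"

text \<open>Countable structures are represented (up to isomorphism) with carrier a set of
  natural numbers.\<close>
definition in_age_closure :: "('f \<Rightarrow> nat) \<Rightarrow> ('r \<Rightarrow> nat) \<Rightarrow> ('a, 'f, 'r) struct \<Rightarrow> (nat, 'f, 'r) struct \<Rightarrow> bool" where
  "in_age_closure fa ra U A \<longleftrightarrow> is_struct fa ra A \<and>
     (\<forall>B. substructure fa ra B A \<and> fin_gen fa B \<longrightarrow> in_age fa ra U B)"

definition universal_homogeneous_endo ::
    "('f \<Rightarrow> nat) \<Rightarrow> ('r \<Rightarrow> nat) \<Rightarrow> ('a, 'f, 'r) struct \<Rightarrow> ('a \<Rightarrow> 'a) \<Rightarrow> bool" where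
  "universal_homogeneous_endo fa ra U u \<longleftrightarrow>
     is_endo fa ra U u \<and>
     (\<forall>(A :: (nat, 'f, 'r) struct) h. in_age_closure fa ra U A \<and> is_hom fa ra A U h \<longrightarrow>
        (\<exists>\<iota>. is_emb fa ra A U \<iota> \<and> (\<forall>x \<in> carrier A. h x = u (\<iota> x)))) \<and>
     (\<forall>A \<iota>. substructure fa ra A U \<and> fin_gen fa A \<and> is_emb fa ra A U \<iota> \<and>
           (\<forall>x \<in> carrier A. u (\<iota> x) = u x) \<longrightarrow>
        (\<exists>\<alpha>. is_aut fa ra U \<alpha> \<and> (\<forall>x \<in> carrier U. u (\<alpha> x) = u x) \<and>
             (\<forall>x \<in> carrier A. \<alpha> x = \<iota> x)))"

definition homogeneous :: "('f \<Rightarrow> nat) \<Rightarrow> ('r \<Rightarrow> nat) \<Rightarrow> ('a, 'f, 'r) struct \<Rightarrow> bool" where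
  "homogeneous fa ra U \<longleftrightarrow>
     (\<forall>A B i. substructure fa ra A U \<and> fin_gen fa A \<and> substructure fa ra B U \<and> fin_gen fa B \<and>
        is_iso fa ra A B i \<longrightarrow> (\<exists>\<alpha>. is_aut fa ra U \<alpha> \<and> (\<forall>x \<in> carrier A. \<alpha> x = i x)))"

definition hom_homogeneous :: "('f \<Rightarrow> nat) \<Rightarrow> ('r \<Rightarrow> nat) \<Rightarrow> ('a, 'f, 'r) struct \<Rightarrow> bool" where
  "hom_homogeneous fa ra U \<longleftrightarrow>
     (\<forall>A B h. substructure fa ra A U \<and> fin_gen fa A \<and> substructure fa ra B U \<and> fin_gen fa B \<and>
        is_hom fa ra A B h \<longrightarrow> (\<exists>e. is_endo fa ra U e \<and> (\<forall>x \<in> carrier A. e x = h x)))"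

end

theory Submission
  imports Defs
begin

definition Sub :: "('a, 'f, 'r) struct \<Rightarrow> 'a set \<Rightarrow> ('a, 'f, 'r) struct" where
  "Sub U C = \<lparr>carrier = C, fun_of = fun_of U, rel_of = rel_of U\<rparr>"

lemma Sub_simps[simp]: "carrier (Sub U C) = C" "fun_of (Sub U C) = fun_of U" "rel_of (Sub U C) = rel_of U"
  by (simp_all add: Sub_def)

lemma tuples_mono: "S \<subseteq> T \<Longrightarrow> xs \<in> tuples S n \<Longrightarrow> xs \<in> tuples T n"
  by (auto simp: tuples_def)

lemma tuples_map: "xs \<in> tuples S n \<Longrightarrow> (\<And>x. x \<in> S \<Longrightarrow> h x \<in> T) \<Longrightarrow> map h xs \<in> tuples T n"
  by (auto simp: tuples_def)

lemma tuples_Inter: "xs \<in> tuples (\<Inter>K) n \<Longrightarrow> C \<in> K \<Longrightarrow> xs \<in> tuples C n"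
  by (auto simp: tuples_def)

lemma tuples_preimage:
  assumes "ys \<in> tuples (h ` S) n"
  shows "map (inv_into S h) ys \<in> tuples S n \<and> map h (map (inv_into S h) ys) = ys"
  using assms by (auto simp: tuples_def inv_into_into f_inv_into_f intro!: map_idI)

lemma gen_least: "S \<subseteq> X \<Longrightarrow> X \<subseteq> carrier U \<Longrightarrow> closed_under fa U X \<Longrightarrow> generated fa U S \<subseteq> X"
  unfolding generated_def by blast

lemma gen_sup: "S \<subseteq> generated fa U S"
  unfolding generated_def by blast

lemma gen_closed:
  assumes "is_struct fa ra U" "S \<subseteq> carrier U"
  shows "closed_under fa U (generated fa U S)" "generated fa U S \<subseteq> carrier U"
proof -
  show "generated fa U S \<subseteq> carrier U" using assms unfolding generated_def is_struct_def by blast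
  show "closed_under fa U (generated fa U S)"
    unfolding closed_under_def
  proof (intro allI ballI)
    fix f xs assume xs: "xs \<in> tuples (generated fa U S) (fa f)"
    have "fun_of U f xs \<in> C" if C: "C \<in> {C. S \<subseteq> C \<and> C \<subseteq> carrier U \<and> closed_under fa U C}" for C
      using tuples_Inter[OF xs[unfolded generated_def] C] C by (auto simp: closed_under_def)
    then show "fun_of U f xs \<in> generated fa U S" unfolding generated_def by blast
  qed
qed

lemma gen_mono: "is_struct fa ra U \<Longrightarrow> S \<subseteq> T \<Longrightarrow> T \<subseteq> carrier U \<Longrightarrow> generated fa U S \<subseteq> generated fa U T"
  by (meson gen_closed gen_least gen_sup order_trans)

lemma closed_under_cong:
  "(\<And>f xs. xs \<in> tuples X (fa f) \<Longrightarrow> fun_of A f xs = fun_of B f xs) \<Longrightarrow> closed_under fa A X = closed_under fa B X"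
  unfolding closed_under_def by auto

lemma sub_struct:
  assumes "substructure fa ra A U" shows "is_struct fa ra A"
  using assms unfolding substructure_def is_struct_def closed_under_def by auto

lemma sub_generated:
  assumes U: "is_struct fa ra U" and A: "substructure fa ra A U" and S: "S \<subseteq> carrier A"
  shows "generated fa A S = generated fa U S"
proof -
  have cA: "carrier A \<subseteq> carrier U" "closed_under fa U (carrier A)"
    using A unfolding substructure_def by blast+
  have ef: "\<forall>f. \<forall>xs\<in>tuples (carrier A) (fa f). fun_of A f xs = fun_of U f xs"
    using A unfolding substructure_def by blast
  have cong: "closed_under fa A X = closed_under fa U X" if "X \<subseteq> carrier A" for X
  proof (rule closed_under_cong)
    fix f xs assume "xs \<in> tuples X (fa f)"
    then have "xs \<in> tuples (carrier A) (fa f)" using tuples_mono[OF that] by blast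
    then show "fun_of A f xs = fun_of U f xs" using ef by blast
  qed
  have sA: "is_struct fa ra A" using sub_struct[OF A] .
  have SU: "S \<subseteq> carrier U" using S cA by blast
  have g1: "generated fa U S \<subseteq> carrier A" using cA S by (intro gen_least) auto
  have g2: "closed_under fa U (generated fa U S)" using gen_closed(1)[OF U SU] .
  have 1: "generated fa A S \<subseteq> generated fa U S"
    by (rule gen_least[OF gen_sup g1]) (simp add: cong[OF g1] g2)
  have h1: "generated fa A S \<subseteq> carrier A" and h2: "closed_under fa A (generated fa A S)"
    using gen_closed[OF sA S] by auto
  have 2: "generated fa U S \<subseteq> generated fa A S"
    by (rule gen_least[OF gen_sup]) (use h1 h2 cong[OF h1] cA in auto)
  show ?thesis using 1 2 by blast
qed

lemma Sub_substructure:
  "C \<subseteq> carrier U \<Longrightarrow> closed_under fa U C \<Longrightarrow> substructure fa ra (Sub U C) U"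
  unfolding substructure_def by auto

lemma self_substructure: "is_struct fa ra U \<Longrightarrow> substructure fa ra U U"
  unfolding substructure_def is_struct_def by auto

lemma Sub_fg:
  assumes U: "is_struct fa ra U" and F: "finite F" "F \<subseteq> carrier U"
  shows "substructure fa ra (Sub U (generated fa U F)) U" "fin_gen fa (Sub U (generated fa U F))"
proof -
  have g: "generated fa U F \<subseteq> carrier U" "closed_under fa U (generated fa U F)"
    using gen_closed[OF U F(2)] by auto
  show s: "substructure fa ra (Sub U (generated fa U F)) U"
    using g by (rule Sub_substructure)
  have "generated fa (Sub U (generated fa U F)) F = generated fa U F"
    using sub_generated[OF U s] gen_sup[of F fa U] by simp
  then show "fin_gen fa (Sub U (generated fa U F))"
    unfolding fin_gen_def using F gen_sup[of F fa U] by (intro exI[of _ F]) simp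
qed

lemma hom_comp: assumes g: "is_hom fa ra A B g" and h: "is_hom fa ra B C h" shows "is_hom fa ra A C (h \<circ> g)"
proof -
  have m: "map g xs \<in> tuples (carrier B) n" if "xs \<in> tuples (carrier A) n" for xs n
    using that g unfolding is_hom_def by (intro tuples_map) auto
  show ?thesis unfolding is_hom_def
  proof (intro conjI allI ballI impI)
    fix x assume "x \<in> carrier A" then show "(h \<circ> g) x \<in> carrier C" using g h unfolding is_hom_def by auto
  next
    fix f xs assume xs: "xs \<in> tuples (carrier A) (fa f)"
    have "h (g (fun_of A f xs)) = h (fun_of B f (map g xs))" using g xs unfolding is_hom_def by auto
    also have "\<dots> = fun_of C f (map h (map g xs))" using h m[OF xs] unfolding is_hom_def by auto
    finally show "(h \<circ> g) (fun_of A f xs) = fun_of C f (map (h \<circ> g) xs)" by simp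
  next
    fix r xs assume xs: "xs \<in> tuples (carrier A) (ra r)" and "rel_of A r xs"
    then have "rel_of B r (map g xs)" using g unfolding is_hom_def by blast
    then have "rel_of C r (map h (map g xs))" using h m[OF xs] unfolding is_hom_def by blast
    then show "rel_of C r (map (h \<circ> g) xs)" by simp
  qed
qed

lemma emb_comp: assumes g: "is_emb fa ra A B g" and h: "is_emb fa ra B C h" shows "is_emb fa ra A C (h \<circ> g)"
proof -
  have hg: "is_hom fa ra A C (h \<circ> g)" using assms hom_comp unfolding is_emb_def by blast
  have gA: "g ` carrier A \<subseteq> carrier B" using assms unfolding is_emb_def is_hom_def by auto
  have inj: "inj_on (h \<circ> g) (carrier A)"
    using assms gA unfolding is_emb_def by (meson comp_inj_on inj_on_subset)
  have m: "map g xs \<in> tuples (carrier B) n" if "xs \<in> tuples (carrier A) n" for xs n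
    using that gA by (intro tuples_map) auto
  have refl: "rel_of A r xs" if xs: "xs \<in> tuples (carrier A) (ra r)" and "rel_of C r (map (h \<circ> g) xs)" for r xs
  proof -
    have "rel_of C r (map h (map g xs))" using that by simp
    then have "rel_of B r (map g xs)" using h m[OF xs] unfolding is_emb_def by blast
    then show ?thesis using g xs unfolding is_emb_def by blast
  qed
  show ?thesis unfolding is_emb_def using hg inj refl by blast
qed

lemma hom_sub_dom: assumes B: "substructure fa ra B T" and h: "is_hom fa ra T X h" shows "is_hom fa ra B X h"
proof -
  have sub: "carrier B \<subseteq> carrier T" using B unfolding substructure_def by blast
  have t: "xs \<in> tuples (carrier T) n" if "xs \<in> tuples (carrier B) n" for xs n
    using tuples_mono[OF sub that] .
  have ef: "\<forall>f. \<forall>xs\<in>tuples (carrier B) (fa f). fun_of B f xs = fun_of T f xs"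
   and er: "\<forall>r. \<forall>xs\<in>tuples (carrier B) (ra r). rel_of B r xs = rel_of T r xs"
    using B unfolding substructure_def by blast+
  show ?thesis unfolding is_hom_def
  proof (intro conjI allI ballI impI)
    fix x assume "x \<in> carrier B" then show "h x \<in> carrier X" using sub h unfolding is_hom_def by blast
  next
    fix f xs assume xs: "xs \<in> tuples (carrier B) (fa f)"
    then show "h (fun_of B f xs) = fun_of X f (map h xs)" using ef t[OF xs] h unfolding is_hom_def by simp
  next
    fix r xs assume xs: "xs \<in> tuples (carrier B) (ra r)" and "rel_of B r xs"
    then show "rel_of X r (map h xs)" using er t[OF xs] h unfolding is_hom_def by simp
  qed
qed

lemma emb_sub_dom: assumes "substructure fa ra B T" "is_emb fa ra T X h" shows "is_emb fa ra B X h"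
proof -
  have "is_hom fa ra B X h" using assms hom_sub_dom unfolding is_emb_def by blast
  moreover have "inj_on h (carrier B)" using assms unfolding is_emb_def substructure_def
    by (meson inj_on_subset)
  moreover have "\<forall>r. \<forall>xs\<in>tuples (carrier B) (ra r). rel_of X r (map h xs) \<longrightarrow> rel_of B r xs"
    using assms unfolding is_emb_def substructure_def by (metis tuples_mono)
  ultimately show ?thesis unfolding is_emb_def by blast
qed

lemma hom_cod_up: assumes Y: "substructure fa ra Y U" and h: "is_hom fa ra X Y h" shows "is_hom fa ra X U h"
proof -
  have sub: "carrier Y \<subseteq> carrier U" using Y unfolding substructure_def by blast
  have m: "map h xs \<in> tuples (carrier Y) n" if "xs \<in> tuples (carrier X) n" for xs n
    using that h unfolding is_hom_def by (intro tuples_map) auto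
  have ef: "\<forall>f. \<forall>xs\<in>tuples (carrier Y) (fa f). fun_of Y f xs = fun_of U f xs"
   and er: "\<forall>r. \<forall>xs\<in>tuples (carrier Y) (ra r). rel_of Y r xs = rel_of U r xs"
    using Y unfolding substructure_def by blast+
  show ?thesis unfolding is_hom_def
  proof (intro conjI allI ballI impI)
    fix x assume "x \<in> carrier X" then show "h x \<in> carrier U" using sub h unfolding is_hom_def by blast
  next
    fix f xs assume xs: "xs \<in> tuples (carrier X) (fa f)"
    then show "h (fun_of X f xs) = fun_of U f (map h xs)" using ef m[OF xs] h unfolding is_hom_def by simp
  next
    fix r xs assume xs: "xs \<in> tuples (carrier X) (ra r)" and "rel_of X r xs"
    then have "rel_of Y r (map h xs)" using h unfolding is_hom_def by blast
    then show "rel_of U r (map h xs)" using er m[OF xs] by blast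
  qed
qed

lemma emb_cod_up: assumes Y: "substructure fa ra Y U" and h: "is_emb fa ra X Y h" shows "is_emb fa ra X U h"
proof -
  have m: "map h xs \<in> tuples (carrier Y) n" if "xs \<in> tuples (carrier X) n" for xs n
    using that h unfolding is_emb_def is_hom_def by (intro tuples_map) auto
  have er: "\<forall>r. \<forall>xs\<in>tuples (carrier Y) (ra r). rel_of Y r xs = rel_of U r xs"
    using Y unfolding substructure_def by blast
  have "is_hom fa ra X U h" using hom_cod_up[OF Y] h unfolding is_emb_def by blast
  moreover have "rel_of X r xs" if xs: "xs \<in> tuples (carrier X) (ra r)" and "rel_of U r (map h xs)" for r xs
    using that er m[OF xs] h unfolding is_emb_def by metis
  ultimately show ?thesis using h unfolding is_emb_def by blast
qed

lemma hom_cod_down: assumes "substructure fa ra Y U" "is_hom fa ra X U h" "h ` carrier X \<subseteq> carrier Y"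
  shows "is_hom fa ra X Y h"
proof -
  have m: "map h xs \<in> tuples (carrier Y) n" if "xs \<in> tuples (carrier X) n" for xs n
    using that assms(3) by (intro tuples_map) auto
  show ?thesis using assms(1,2,3) m unfolding substructure_def is_hom_def by auto
qed

lemma emb_cod_down: assumes "substructure fa ra Y U" "is_emb fa ra X U h" "h ` carrier X \<subseteq> carrier Y"
  shows "is_emb fa ra X Y h"
proof -
  have m: "map h xs \<in> tuples (carrier Y) n" if "xs \<in> tuples (carrier X) n" for xs n
    using that assms(3) by (intro tuples_map) auto
  show ?thesis using assms(1,2,3) m hom_cod_down[OF assms(1) _ assms(3)] unfolding substructure_def is_emb_def by auto
qed


lemma img_gen:
  assumes U: "is_struct fa ra U" and A: "is_struct fa ra A" and h: "is_hom fa ra A U h"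
    and S: "S \<subseteq> carrier A" and g: "generated fa A S = carrier A"
  shows "closed_under fa U (h ` carrier A)" "generated fa U (h ` S) = h ` carrier A"
proof -
  have hA: "h ` carrier A \<subseteq> carrier U" using h unfolding is_hom_def by auto
  show cl: "closed_under fa U (h ` carrier A)"
    unfolding closed_under_def
  proof (intro allI ballI)
    fix f ys assume ys: "ys \<in> tuples (h ` carrier A) (fa f)"
    define xs where "xs = map (inv_into (carrier A) h) ys"
    have xs: "xs \<in> tuples (carrier A) (fa f)" "map h xs = ys"
      using tuples_preimage[OF ys] unfolding xs_def by auto
    have "fun_of U f ys = h (fun_of A f xs)" using h xs unfolding is_hom_def by auto
    moreover have "fun_of A f xs \<in> carrier A" using A xs unfolding is_struct_def closed_under_def by auto
    ultimately show "fun_of U f ys \<in> h ` carrier A" by auto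
  qed
  have 1: "generated fa U (h ` S) \<subseteq> h ` carrier A"
    using S hA cl by (intro gen_least) auto
  define G where "G = generated fa U (h ` S)"
  have hS: "h ` S \<subseteq> carrier U" using S hA by auto
  define X where "X = {x \<in> carrier A. h x \<in> G}"
  have "closed_under fa A X"
    unfolding closed_under_def
  proof (intro allI ballI)
    fix f xs assume xs: "xs \<in> tuples X (fa f)"
    have xsA: "xs \<in> tuples (carrier A) (fa f)" using xs tuples_mono[of X "carrier A"] X_def by blast
    have "fun_of A f xs \<in> carrier A" using A xsA unfolding is_struct_def closed_under_def by auto
    moreover have "h (fun_of A f xs) = fun_of U f (map h xs)" using h xsA unfolding is_hom_def by auto
    moreover have "map h xs \<in> tuples G (fa f)" using xs by (intro tuples_map) (auto simp: X_def)
    then have "fun_of U f (map h xs) \<in> G" using gen_closed(1)[OF U hS] unfolding G_def closed_under_def by auto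
    ultimately show "fun_of A f xs \<in> X" unfolding X_def by auto
  qed
  moreover have "S \<subseteq> X" using S gen_sup[of "h ` S" fa U] unfolding X_def G_def by auto
  ultimately have "generated fa A S \<subseteq> X" by (intro gen_least) (auto simp: X_def)
  then have "h ` carrier A \<subseteq> G" using g unfolding X_def by auto
  then show "generated fa U (h ` S) = h ` carrier A" using 1 G_def by auto
qed

lemma iso_inv:
  assumes A: "is_struct fa ra A" and i: "is_iso fa ra A B h"
  shows "is_iso fa ra B A (inv_into (carrier A) h)"
proof -
  have inj: "inj_on h (carrier A)" and im: "h ` carrier A = carrier B" and hh: "is_hom fa ra A B h"
    and refl: "\<forall>r. \<forall>xs\<in>tuples (carrier A) (ra r). rel_of B r (map h xs) \<longrightarrow> rel_of A r xs"
    using i unfolding is_iso_def is_emb_def by auto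
  define g where "g = inv_into (carrier A) h"
  have bij: "bij_betw g (carrier B) (carrier A)"
    unfolding g_def using inj im by (metis bij_betw_imageI bij_betw_inv_into)
  have pre: "map g ys \<in> tuples (carrier A) n \<and> map h (map g ys) = ys" if "ys \<in> tuples (carrier B) n" for ys n
    using tuples_preimage[of ys h "carrier A" n] that im unfolding g_def by auto
  have gh: "g (h x) = x" if "x \<in> carrier A" for x using inj that unfolding g_def by auto
  have fn: "g (fun_of B f ys) = fun_of A f (map g ys)" if ys: "ys \<in> tuples (carrier B) (fa f)" for f ys
  proof -
    have "fun_of B f ys = fun_of B f (map h (map g ys))" using pre[OF ys] by simp
    also have "\<dots> = h (fun_of A f (map g ys))" using hh pre[OF ys] unfolding is_hom_def by auto
    finally show ?thesis using gh A pre[OF ys] unfolding is_struct_def closed_under_def by auto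
  qed
  have rel: "rel_of A r (map g ys) = rel_of B r ys" if ys: "ys \<in> tuples (carrier B) (ra r)" for r ys
    using hh refl pre[OF ys] unfolding is_hom_def by metis
  show ?thesis unfolding g_def[symmetric] is_iso_def is_emb_def is_hom_def
    using bij fn rel by (auto simp: bij_betw_def)
qed

lemma iso_id: "is_iso fa ra U U id"
  unfolding is_iso_def is_emb_def is_hom_def by auto

lemma factor_lemma:
  fixes fa :: "'f \<Rightarrow> nat" and ra :: "'r \<Rightarrow> nat" and U :: "('a, 'f, 'r) struct"
  assumes U: "is_struct fa ra U" and cU: "countable (carrier U)"
    and uhe: "universal_homogeneous_endo fa ra U u"
    and A: "substructure fa ra A U" and h: "is_hom fa ra A U h"
  shows "\<exists>j. is_emb fa ra A U j \<and> (\<forall>x\<in>carrier A. h x = u (j x))"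
proof -
  define C where "C = carrier A"
  have cC: "countable C" using A cU unfolding C_def substructure_def by (meson countable_subset)
  define enc where "enc = to_nat_on C"
  have inj: "inj_on enc C" unfolding enc_def using cC by (simp add: inj_on_to_nat_on)
  define dec where "dec = inv_into C enc"
  have de: "dec (enc x) = x" if "x \<in> C" for x using inj that unfolding dec_def by auto
  have ed: "enc (dec n) = n" "dec n \<in> C" if "n \<in> enc ` C" for n
    using that unfolding dec_def by (auto simp: inv_into_into f_inv_into_f)
  have sA: "is_struct fa ra A" using sub_struct[OF A] .
  define T :: "(nat, 'f, 'r) struct" where
    "T = \<lparr>carrier = enc ` C, fun_of = (\<lambda>f ns. enc (fun_of A f (map dec ns))),
           rel_of = (\<lambda>r ns. rel_of A r (map dec ns))\<rparr>"
  have decT: "map dec ns \<in> tuples C n" if "ns \<in> tuples (enc ` C) n" for ns n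
    using that ed by (intro tuples_map) auto
  have clA: "fun_of A f xs \<in> C" if "xs \<in> tuples C (fa f)" for f xs
    using sA that unfolding is_struct_def closed_under_def C_def by auto
  have sT: "is_struct fa ra T" unfolding is_struct_def closed_under_def T_def using clA decT by auto
  have embdec: "is_emb fa ra T A dec"
    unfolding is_emb_def is_hom_def
  proof (intro conjI allI ballI impI)
    show "inj_on dec (carrier T)" unfolding T_def dec_def by (simp add: inj_on_inv_into)
  qed (auto simp: T_def C_def[symmetric] ed de decT clA)
  have mde: "map (dec \<circ> enc) xs = xs" if "xs \<in> tuples C n" for xs n
    using that de by (auto simp: tuples_def intro!: map_idI)
  have embenc: "is_emb fa ra A T enc"
    unfolding is_emb_def is_hom_def
  proof (intro conjI allI ballI impI)
    show "inj_on enc (carrier A)" using inj C_def by simp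
  qed (auto simp: T_def C_def[symmetric] mde)
  have closure: "in_age_closure fa ra U T"
    unfolding in_age_closure_def in_age_def
  proof (intro conjI allI impI sT)
    fix B assume B: "substructure fa ra B T \<and> fin_gen fa B"
    show "is_struct fa ra B" using sub_struct B by blast
    show "fin_gen fa B" using B by blast
    have "is_emb fa ra B A dec" using emb_sub_dom B embdec by blast
    then show "\<exists>e. is_emb fa ra B U e" using emb_cod_up[OF A] by blast
  qed
  have "is_hom fa ra T U (h \<circ> dec)" using hom_comp embdec h unfolding is_emb_def by blast
  then obtain \<iota> where io: "is_emb fa ra T U \<iota>" "\<forall>x\<in>carrier T. (h \<circ> dec) x = u (\<iota> x)"
    using uhe closure unfolding universal_homogeneous_endo_def by blast
  have "is_emb fa ra A U (\<iota> \<circ> enc)" using emb_comp embenc io(1) by blast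
  moreover have "\<forall>x\<in>carrier A. h x = u ((\<iota> \<circ> enc) x)"
    using io(2) de unfolding T_def C_def by auto
  ultimately show ?thesis by blast
qed


lemma fg_image:
  assumes U: "is_struct fa ra U" and A: "substructure fa ra A U" and fA: "fin_gen fa A"
    and h: "is_hom fa ra A U h"
  shows "substructure fa ra (Sub U (h ` carrier A)) U" "fin_gen fa (Sub U (h ` carrier A))"
proof -
  have sA: "is_struct fa ra A" using sub_struct[OF A] .
  obtain S where S: "finite S" "S \<subseteq> carrier A" "generated fa A S = carrier A"
    using fA unfolding fin_gen_def by blast
  have im: "closed_under fa U (h ` carrier A)" "generated fa U (h ` S) = h ` carrier A"
    using img_gen[OF U sA h S(2,3)] by auto
  have hA: "h ` carrier A \<subseteq> carrier U" using h unfolding is_hom_def by blast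
  show s: "substructure fa ra (Sub U (h ` carrier A)) U" using Sub_substructure[OF hA im(1)] .
  have "generated fa (Sub U (h ` carrier A)) (h ` S) = h ` carrier A"
    using sub_generated[OF U s, of "h ` S"] S(2) im(2) by (simp add: image_mono)
  then show "fin_gen fa (Sub U (h ` carrier A))"
    unfolding fin_gen_def using S by (intro exI[of _ "h ` S"]) auto
qed

lemma homog_imp_hh:
  assumes U: "is_struct fa ra U" and cU: "countable (carrier U)"
    and uhe: "universal_homogeneous_endo fa ra U u" and hom: "homogeneous fa ra U"
  shows "hom_homogeneous fa ra U"
  unfolding hom_homogeneous_def
proof (intro allI impI)
  fix A B h assume asm: "substructure fa ra A U \<and> fin_gen fa A \<and> substructure fa ra B U \<and> fin_gen fa B \<and> is_hom fa ra A B h"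
  then have A: "substructure fa ra A U" and fA: "fin_gen fa A" and B: "substructure fa ra B U"
    and h: "is_hom fa ra A B h" by auto
  have hU: "is_hom fa ra A U h" using hom_cod_up[OF B h] .
  obtain j where j: "is_emb fa ra A U j" "\<forall>x\<in>carrier A. h x = u (j x)"
    using factor_lemma[OF U cU uhe A hU] by blast
  have jh: "is_hom fa ra A U j" using j(1) unfolding is_emb_def by blast
  note D = fg_image[OF U A fA jh]
  have iso: "is_iso fa ra A (Sub U (j ` carrier A)) j"
    unfolding is_iso_def using emb_cod_down[OF D(1) j(1)] by simp
  obtain \<alpha> where a: "is_aut fa ra U \<alpha>" "\<forall>x\<in>carrier A. \<alpha> x = j x"
    using hom A fA D iso unfolding homogeneous_def by (metis Sub_simps(1))
  have "is_hom fa ra U U \<alpha>" using a(1) unfolding is_aut_def is_iso_def is_emb_def by blast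
  moreover have "is_hom fa ra U U u" using uhe unfolding universal_homogeneous_endo_def is_endo_def by blast
  ultimately have "is_endo fa ra U (u \<circ> \<alpha>)" unfolding is_endo_def by (rule hom_comp)
  moreover have "\<forall>x\<in>carrier A. (u \<circ> \<alpha>) x = h x" using a(2) j(2) by simp
  ultimately show "\<exists>e. is_endo fa ra U e \<and> (\<forall>x\<in>carrier A. e x = h x)" by blast
qed

lemma lemma_L:
  assumes U: "is_struct fa ra U" and cU: "countable (carrier U)"
    and uhe: "universal_homogeneous_endo fa ra U u" and hh: "hom_homogeneous fa ra U"
    and A: "substructure fa ra A U" and fA: "fin_gen fa A"
    and B: "substructure fa ra B U" and fB: "fin_gen fa B"
    and i: "is_iso fa ra A B i"
  shows "\<exists>\<sigma>. is_emb fa ra U U \<sigma> \<and> (\<forall>a\<in>carrier A. \<sigma> (i a) = a)"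
proof -
  have sA: "is_struct fa ra A" using sub_struct[OF A] .
  have uU: "is_hom fa ra U U u" using uhe unfolding universal_homogeneous_endo_def is_endo_def by blast
  have uA: "is_hom fa ra A U u" using hom_sub_dom[OF A uU] .
  note D = fg_image[OF U A fA uA]
  define g where "g = inv_into (carrier A) i"
  have gi: "is_iso fa ra B A g" unfolding g_def using iso_inv[OF sA i] .
  have uD: "is_hom fa ra A (Sub U (u ` carrier A)) u" using hom_cod_down[OF D(1) uA] by simp
  have gh: "is_hom fa ra B (Sub U (u ` carrier A)) (u \<circ> g)"
    using hom_comp[OF _ uD] gi unfolding is_iso_def is_emb_def by blast
  obtain e where e: "is_endo fa ra U e" "\<forall>x\<in>carrier B. e x = (u \<circ> g) x"
    using hh B fB D gh unfolding hom_homogeneous_def by blast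
  have eh: "is_hom fa ra U U e" using e(1) unfolding is_endo_def .
  obtain \<kappa> where k: "is_emb fa ra U U \<kappa>" "\<forall>x\<in>carrier U. e x = u (\<kappa> x)"
    using factor_lemma[OF U cU uhe self_substructure[OF U] eh] by blast
  have iAU: "is_emb fa ra A U i" using emb_cod_up[OF B] i unfolding is_iso_def by blast
  have io: "is_emb fa ra A U (\<kappa> \<circ> i)" using emb_comp[OF iAU k(1)] .
  have injI: "inj_on i (carrier A)" and iB: "i ` carrier A = carrier B"
    using i unfolding is_iso_def is_emb_def by auto
  have BU: "carrier B \<subseteq> carrier U" and AU: "carrier A \<subseteq> carrier U"
    using A B unfolding substructure_def by auto
  have fib: "\<forall>x\<in>carrier A. u ((\<kappa> \<circ> i) x) = u x"
  proof
    fix a assume a: "a \<in> carrier A"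
    then have ia: "i a \<in> carrier B" using iB by blast
    have "u (\<kappa> (i a)) = e (i a)" using k(2) ia BU by auto
    also have "\<dots> = u (g (i a))" using e(2) ia by simp
    also have "g (i a) = a" unfolding g_def using injI a by simp
    finally show "u ((\<kappa> \<circ> i) a) = u a" by simp
  qed
  obtain \<alpha> where al: "is_aut fa ra U \<alpha>" "\<forall>x\<in>carrier A. \<alpha> x = (\<kappa> \<circ> i) x"
    using uhe A fA io fib unfolding universal_homogeneous_endo_def by blast
  have ai: "is_iso fa ra U U (inv_into (carrier U) \<alpha>)"
    using iso_inv[OF U] al(1) unfolding is_aut_def by blast
  have injA: "inj_on \<alpha> (carrier U)" using al(1) unfolding is_aut_def is_iso_def is_emb_def by blast
  have "is_emb fa ra U U (inv_into (carrier U) \<alpha> \<circ> \<kappa>)"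
    using emb_comp[OF k(1)] ai unfolding is_iso_def by blast
  moreover have "\<forall>a\<in>carrier A. (inv_into (carrier U) \<alpha> \<circ> \<kappa>) (i a) = a"
  proof
    fix a assume a: "a \<in> carrier A"
    have "\<kappa> (i a) = \<alpha> a" using al(2) a by simp
    then show "(inv_into (carrier U) \<alpha> \<circ> \<kappa>) (i a) = a" using injA a AU by auto
  qed
  ultimately show ?thesis by blast
qed


definition good :: "('f \<Rightarrow> nat) \<Rightarrow> ('r \<Rightarrow> nat) \<Rightarrow> ('a, 'f, 'r) struct \<Rightarrow> 'a set \<times> ('a \<Rightarrow> 'a) \<Rightarrow> bool" where
  "good fa ra U s \<longleftrightarrow> (\<exists>F. finite F \<and> F \<subseteq> carrier U \<and> generated fa U F = fst s) \<and>
      is_emb fa ra (Sub U (fst s)) U (snd s)"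

definition extends :: "'a set \<times> ('a \<Rightarrow> 'a) \<Rightarrow> 'a set \<times> ('a \<Rightarrow> 'a) \<Rightarrow> bool" where
  "extends s s' \<longleftrightarrow> fst s \<subseteq> fst s' \<and> (\<forall>c\<in>fst s. snd s' c = snd s c)"

lemma extends_refl: "extends s s" unfolding extends_def by auto

lemma extends_trans: "extends s1 s2 \<Longrightarrow> extends s2 s3 \<Longrightarrow> extends s1 s3"
  unfolding extends_def by (metis subset_iff)

lemma good_setup:
  assumes U: "is_struct fa ra U" and g: "good fa ra U (C, \<phi>)"
  obtains F where "finite F" "F \<subseteq> carrier U" "generated fa U F = C"
    "substructure fa ra (Sub U C) U" "fin_gen fa (Sub U C)" "is_emb fa ra (Sub U C) U \<phi>"
    "is_iso fa ra (Sub U C) (Sub U (\<phi> ` C)) \<phi>"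
    "substructure fa ra (Sub U (\<phi> ` C)) U" "fin_gen fa (Sub U (\<phi> ` C))"
    "generated fa U (\<phi> ` F) = \<phi> ` C"
proof -
  obtain F where F: "finite F" "F \<subseteq> carrier U" "generated fa U F = C" and e: "is_emb fa ra (Sub U C) U \<phi>"
    using g unfolding good_def by auto
  note SC = Sub_fg[OF U F(1,2), unfolded F(3)]
  have eh: "is_hom fa ra (Sub U C) U \<phi>" using e unfolding is_emb_def by blast
  note SD = fg_image[OF U SC(1) SC(2) eh, simplified]
  have iso: "is_iso fa ra (Sub U C) (Sub U (\<phi> ` C)) \<phi>"
    unfolding is_iso_def using emb_cod_down[OF SD(1) e] by simp
  have FC: "F \<subseteq> C" using gen_sup[of F fa U] F(3) by blast
  have gC: "generated fa (Sub U C) F = C" using sub_generated[OF U SC(1)] FC F(3) by simp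
  have "generated fa U (\<phi> ` F) = \<phi> ` C"
    using img_gen(2)[OF U sub_struct[OF SC(1)] eh] FC gC by simp
  then show ?thesis by (rule that[OF F SC e iso SD])
qed

lemma forth_step:
  assumes U: "is_struct fa ra U" and cU: "countable (carrier U)"
    and uhe: "universal_homogeneous_endo fa ra U u" and hh: "hom_homogeneous fa ra U"
    and g: "good fa ra U s" and x: "x \<in> carrier U"
  shows "\<exists>s'. good fa ra U s' \<and> extends s s' \<and> x \<in> fst s'"
proof -
  obtain C \<phi> where s: "s = (C, \<phi>)" by (cases s)
  obtain F where F: "finite F" "F \<subseteq> carrier U" "generated fa U F = C"
    and SC: "substructure fa ra (Sub U C) U" "fin_gen fa (Sub U C)"
    and e: "is_emb fa ra (Sub U C) U \<phi>"
    and iso: "is_iso fa ra (Sub U C) (Sub U (\<phi> ` C)) \<phi>"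
    and SD: "substructure fa ra (Sub U (\<phi> ` C)) U" "fin_gen fa (Sub U (\<phi> ` C))"
    and gD: "generated fa U (\<phi> ` F) = \<phi> ` C"
    by (rule good_setup[OF U g[unfolded s]])
  have psi: "is_iso fa ra (Sub U (\<phi> ` C)) (Sub U C) (inv_into C \<phi>)"
    using iso_inv[OF sub_struct[OF SC(1)] iso] by simp
  obtain \<sigma> where sg: "is_emb fa ra U U \<sigma>" "\<forall>d\<in>\<phi> ` C. \<sigma> (inv_into C \<phi> d) = d"
    using lemma_L[OF U cU uhe hh SD SC psi] by auto
  have inj: "inj_on \<phi> C" using iso unfolding is_iso_def is_emb_def by simp
  have agree: "\<sigma> c = \<phi> c" if c: "c \<in> C" for c
  proof -
    have "\<sigma> (inv_into C \<phi> (\<phi> c)) = \<phi> c" using sg(2) c by blast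
    then show ?thesis by (simp add: inv_into_f_f[OF inj c])
  qed
  define F' where "F' = insert x F"
  have F': "finite F'" "F' \<subseteq> carrier U" using F x unfolding F'_def by auto
  note SC' = Sub_fg[OF U F']
  have "is_emb fa ra (Sub U (generated fa U F')) U \<sigma>" using emb_sub_dom[OF SC'(1) sg(1)] .
  then have "good fa ra U (generated fa U F', \<sigma>)" unfolding good_def using F' by auto
  moreover have "generated fa U F \<subseteq> generated fa U F'" by (rule gen_mono[OF U _ F'(2)]) (auto simp: F'_def)
  then have "C \<subseteq> generated fa U F'" using F(3) by simp
  then have "extends s (generated fa U F', \<sigma>)" unfolding extends_def s using agree by auto
  moreover have "x \<in> generated fa U F'" using gen_sup[of F' fa U] unfolding F'_def by blast
  ultimately show ?thesis by (intro exI[of _ "(generated fa U F', \<sigma>)"]) auto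
qed

lemma back_step:
  assumes U: "is_struct fa ra U" and cU: "countable (carrier U)"
    and uhe: "universal_homogeneous_endo fa ra U u" and hh: "hom_homogeneous fa ra U"
    and g: "good fa ra U s" and y: "y \<in> carrier U"
  shows "\<exists>s'. good fa ra U s' \<and> extends s s' \<and> y \<in> snd s' ` fst s'"
proof -
  obtain C \<phi> where s: "s = (C, \<phi>)" by (cases s)
  obtain F where F: "finite F" "F \<subseteq> carrier U" "generated fa U F = C"
    and SC: "substructure fa ra (Sub U C) U" "fin_gen fa (Sub U C)"
    and e: "is_emb fa ra (Sub U C) U \<phi>"
    and iso: "is_iso fa ra (Sub U C) (Sub U (\<phi> ` C)) \<phi>"
    and SD: "substructure fa ra (Sub U (\<phi> ` C)) U" "fin_gen fa (Sub U (\<phi> ` C))"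
    and gD: "generated fa U (\<phi> ` F) = \<phi> ` C"
    by (rule good_setup[OF U g[unfolded s]])
  obtain \<sigma> where sg: "is_emb fa ra U U \<sigma>" "\<forall>c\<in>C. \<sigma> (\<phi> c) = c"
    using lemma_L[OF U cU uhe hh SC SD iso] by auto
  have DU: "\<phi> ` C \<subseteq> carrier U" using SD(1) unfolding substructure_def by simp
  have FC: "F \<subseteq> C" using gen_sup[of F fa U] F(3) by blast
  define G where "G = insert y (\<phi> ` F)"
  have G: "finite G" "G \<subseteq> carrier U" using F FC DU y unfolding G_def by auto
  define E where "E = generated fa U G"
  note SE = Sub_fg[OF U G, folded E_def]
  have GE: "G \<subseteq> E" using gen_sup[of G fa U] unfolding E_def .
  have EU: "E \<subseteq> carrier U" using SE(1) unfolding substructure_def by simp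
  have se: "is_emb fa ra (Sub U E) U \<sigma>" using emb_sub_dom[OF SE(1) sg(1)] .
  have seh: "is_hom fa ra (Sub U E) U \<sigma>" using se unfolding is_emb_def by blast
  have gE: "generated fa (Sub U E) G = E" using sub_generated[OF U SE(1)] GE unfolding E_def by simp
  note im = img_gen[OF U sub_struct[OF SE(1)] seh, simplified, OF GE gE]
  define C' where "C' = \<sigma> ` E"
  have C'U: "C' \<subseteq> carrier U" using seh unfolding is_hom_def C'_def by auto
  have SC': "substructure fa ra (Sub U C') U" using Sub_substructure[OF C'U] im(1) unfolding C'_def by blast
  have isoE: "is_iso fa ra (Sub U E) (Sub U C') \<sigma>"
    unfolding is_iso_def using emb_cod_down[OF SC' se] by (simp add: C'_def)
  have isoE': "is_iso fa ra (Sub U C') (Sub U E) (inv_into E \<sigma>)"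
    using iso_inv[OF sub_struct[OF SE(1)] isoE] by simp
  have embC': "is_emb fa ra (Sub U C') U (inv_into E \<sigma>)"
    using emb_cod_up[OF SE(1)] isoE' unfolding is_iso_def by blast
  have injE: "inj_on \<sigma> E" using isoE unfolding is_iso_def is_emb_def by simp
  have "generated fa U (\<phi> ` F) \<subseteq> E" unfolding E_def by (rule gen_mono[OF U _ G(2)]) (auto simp: G_def)
  then have DE: "\<phi> ` C \<subseteq> E" using gD by simp
  have "good fa ra U (C', inv_into E \<sigma>)"
  proof -
    have "\<sigma> ` G \<subseteq> \<sigma> ` E" by (rule image_mono[OF GE])
    then have 1: "\<sigma> ` G \<subseteq> carrier U" using C'U unfolding C'_def by (rule subset_trans)
    have 2: "finite (\<sigma> ` G)" using G(1) by simp
    have 3: "generated fa U (\<sigma> ` G) = C'" using im(2) unfolding C'_def .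
    show ?thesis unfolding good_def fst_conv snd_conv using 1 2 3 embC' by blast
  qed
  moreover
  have "extends s (C', inv_into E \<sigma>)"
    unfolding extends_def s
  proof (intro conjI ballI subsetI, unfold fst_conv snd_conv)
    fix c assume c: "c \<in> C"
    then have "\<phi> c \<in> E" using DE by blast
    moreover have "\<sigma> (\<phi> c) = c" using sg(2) c by blast
    ultimately show "c \<in> C'" unfolding C'_def using rev_image_eqI by metis
  next
    fix c assume c: "c \<in> C"
    then have "\<phi> c \<in> E" using DE by blast
    moreover have "\<sigma> (\<phi> c) = c" using sg(2) c by blast
    ultimately show "inv_into E \<sigma> c = \<phi> c" using inv_into_f_f[OF injE, of "\<phi> c"] by simp
  qed
  moreover have "y \<in> inv_into E \<sigma> ` C'"
  proof -
    have yE: "y \<in> E" using GE unfolding G_def by blast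
    then have "inv_into E \<sigma> (\<sigma> y) = y" using injE by simp
    moreover have "\<sigma> y \<in> C'" using yE unfolding C'_def by blast
    ultimately show ?thesis by (metis image_eqI)
  qed
  ultimately show ?thesis by (intro exI[of _ "(C', inv_into E \<sigma>)"]) auto
qed


lemma sub_Sub_self:
  assumes A: "substructure fa ra A U"
  shows "substructure fa ra (Sub U (carrier A)) A"
proof -
  have sA: "closed_under fa A (carrier A)" using sub_struct[OF A] unfolding is_struct_def .
  have ef: "\<forall>f. \<forall>xs\<in>tuples (carrier A) (fa f). fun_of A f xs = fun_of U f xs"
   and er: "\<forall>r. \<forall>xs\<in>tuples (carrier A) (ra r). rel_of A r xs = rel_of U r xs"
    using A unfolding substructure_def by blast+
  show ?thesis unfolding substructure_def using sA ef er by simp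
qed

lemma hh_imp_homog:
  assumes U: "is_struct fa ra U" and cU: "countable (carrier U)"
    and uhe: "universal_homogeneous_endo fa ra U u" and hh: "hom_homogeneous fa ra U"
  shows "homogeneous fa ra U"
  unfolding homogeneous_def
proof (intro allI impI)
  fix A B i assume asm: "substructure fa ra A U \<and> fin_gen fa A \<and> substructure fa ra B U \<and> fin_gen fa B \<and> is_iso fa ra A B i"
  then have A: "substructure fa ra A U" and fA: "fin_gen fa A" and B: "substructure fa ra B U"
    and i: "is_iso fa ra A B i" by auto
  show "\<exists>\<alpha>. is_aut fa ra U \<alpha> \<and> (\<forall>x\<in>carrier A. \<alpha> x = i x)"
  proof (cases "carrier U = {}")
    case True
    then have "carrier A = {}" using A unfolding substructure_def by blast
    moreover have "is_aut fa ra U id" using iso_id unfolding is_aut_def .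
    ultimately show ?thesis by (intro exI[of _ id]) simp
  next
    case nonempty: False
    define en where "en = from_nat_into (carrier U)"
    have en: "en n \<in> carrier U" for n using nonempty unfolding en_def by (rule from_nat_into)
    have ran: "range en = carrier U" using range_from_nat_into[OF nonempty cU] unfolding en_def .
    define s0 where "s0 = (carrier A, i)"
    have g0: "good fa ra U s0"
    proof -
      obtain S where S: "finite S" "S \<subseteq> carrier A" "generated fa A S = carrier A"
        using fA unfolding fin_gen_def by blast
      have AU: "carrier A \<subseteq> carrier U" using A unfolding substructure_def by blast
      have "generated fa U S = carrier A" using sub_generated[OF U A S(2)] S(3) by simp
      moreover have "is_emb fa ra (Sub U (carrier A)) U i"
        using emb_sub_dom[OF sub_Sub_self[OF A]] emb_cod_up[OF B] i unfolding is_iso_def by blast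
      ultimately show ?thesis unfolding good_def s0_def fst_conv snd_conv using S AU by blast
    qed
    define fw where "fw = (\<lambda>s x. SOME s'. good fa ra U s' \<and> extends s s' \<and> x \<in> fst s')"
    define bw where "bw = (\<lambda>s y. SOME s'. good fa ra U s' \<and> extends s s' \<and> y \<in> snd s' ` fst s')"
    have fw: "good fa ra U (fw s x) \<and> extends s (fw s x) \<and> x \<in> fst (fw s x)"
      if "good fa ra U s" "x \<in> carrier U" for s x
      unfolding fw_def by (rule someI_ex[OF forth_step[OF U cU uhe hh that]])
    have bw: "good fa ra U (bw s x) \<and> extends s (bw s x) \<and> x \<in> snd (bw s x) ` fst (bw s x)"
      if "good fa ra U s" "x \<in> carrier U" for s x
      unfolding bw_def by (rule someI_ex[OF back_step[OF U cU uhe hh that]])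
    define st where "st = rec_nat s0 (\<lambda>n s. bw (fw s (en n)) (en n))"
    have st0: "st 0 = s0" unfolding st_def by simp
    have stS: "st (Suc n) = bw (fw (st n) (en n)) (en n)" for n unfolding st_def by simp
    have gst: "good fa ra U (st n)" for n
    proof (induction n)
      case 0 then show ?case using g0 st0 by simp
    next
      case (Suc n)
      have "good fa ra U (fw (st n) (en n))" using fw[OF Suc.IH en] by blast
      then show ?case unfolding stS using bw[OF _ en] by blast
    qed
    have step: "extends (st n) (st (Suc n)) \<and> en n \<in> fst (st (Suc n)) \<and> en n \<in> snd (st (Suc n)) ` fst (st (Suc n))" for n
    proof -
      have f: "good fa ra U (fw (st n) (en n))" "extends (st n) (fw (st n) (en n))" "en n \<in> fst (fw (st n) (en n))"
        using fw[OF gst en] by auto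
      have b: "extends (fw (st n) (en n)) (st (Suc n))" "en n \<in> snd (st (Suc n)) ` fst (st (Suc n))"
        using bw[OF f(1) en] unfolding stS by auto
      have "extends (st n) (st (Suc n))" using extends_trans[OF f(2) b(1)] .
      moreover have "en n \<in> fst (st (Suc n))" using b(1) f(3) unfolding extends_def by blast
      ultimately show ?thesis using b(2) by blast
    qed
    have mono: "m \<le> n \<Longrightarrow> extends (st m) (st n)" for m n
    proof (induction n)
      case 0 then show ?case using extends_refl by simp
    next
      case (Suc n)
      show ?case
      proof (cases "m = Suc n")
        case True then show ?thesis using extends_refl by simp
      next
        case False
        then have "m \<le> n" using Suc.prems by simp
        then have "extends (st m) (st n)" by (rule Suc.IH)
        then show ?thesis using extends_trans conjunct1[OF step[of n]] by blast
      qed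
    qed
    define Cn where "Cn n = fst (st n)" for n
    define ph where "ph n = snd (st n)" for n
    have Cmono: "Cn m \<subseteq> Cn n" if "m \<le> n" for m n using mono[OF that] unfolding extends_def Cn_def by blast
    have phagree: "ph n x = ph m x" if "m \<le> n" "x \<in> Cn m" for m n x
      using mono[OF that(1)] that(2) unfolding extends_def Cn_def ph_def by blast
    have emb: "is_emb fa ra (Sub U (Cn n)) U (ph n)" for n
      using gst[of n] unfolding good_def Cn_def ph_def by blast
    have Cclosed: "Cn n \<subseteq> carrier U \<and> closed_under fa U (Cn n)" for n
    proof -
      obtain F where "finite F" "F \<subseteq> carrier U" "generated fa U F = Cn n"
        using gst[of n] unfolding good_def Cn_def by blast
      note * = this
      show ?thesis using gen_closed[OF U *(2)] *(3) by simp
    qed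
    have inC: "x \<in> Cn (Suc n)" if "x = en n" for x n using step[of n] that unfolding Cn_def by blast
    have allC: "\<exists>n. x \<in> Cn n" if "x \<in> carrier U" for x
    proof -
      have "x \<in> range en" using that ran by simp
      then obtain n where "x = en n" by blast
      then show ?thesis using inC by blast
    qed
    have listC: "set xs \<subseteq> carrier U \<Longrightarrow> \<exists>n. set xs \<subseteq> Cn n" for xs
    proof (induction xs)
      case Nil then show ?case by simp
    next
      case (Cons a xs)
      then obtain n1 where n1: "set xs \<subseteq> Cn n1" by auto
      obtain n2 where n2: "a \<in> Cn n2" using allC Cons.prems by auto
      have "set xs \<subseteq> Cn (max n1 n2)" using n1 Cmono[of n1 "max n1 n2"] by auto
      moreover have "a \<in> Cn (max n1 n2)" using n2 Cmono[of n2 "max n1 n2"] by auto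
      ultimately show ?case by auto
    qed
    define \<alpha> where "\<alpha> x = ph (LEAST n. x \<in> Cn n) x" for x
    have \<alpha>: "\<alpha> x = ph n x" if "x \<in> Cn n" for x n
    proof -
      define m where "m = (LEAST n. x \<in> Cn n)"
      have "x \<in> Cn m" unfolding m_def using that by (rule LeastI)
      moreover have "m \<le> n" unfolding m_def using that by (rule Least_le)
      ultimately have "ph n x = ph m x" using phagree by blast
      then show ?thesis unfolding \<alpha>_def m_def[symmetric] by simp
    qed
    have tup: "xs \<in> tuples (Cn n) k" if "xs \<in> tuples (carrier U) k" "set xs \<subseteq> Cn n" for xs n k
      using that unfolding tuples_def by auto
    have mapeq: "map \<alpha> xs = map (ph n) xs" if "set xs \<subseteq> Cn n" for xs n
      using that \<alpha> by (auto intro!: map_cong)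
    have aut: "is_iso fa ra U U \<alpha>"
      unfolding is_iso_def is_emb_def is_hom_def
    proof (intro conjI allI ballI impI)
      fix x assume x: "x \<in> carrier U"
      then obtain n where n: "x \<in> Cn n" using allC by blast
      then have "ph n x \<in> carrier U" using emb[of n] unfolding is_emb_def is_hom_def by simp
      then show "\<alpha> x \<in> carrier U" using \<alpha>[OF n] by simp
    next
      fix f xs assume xs: "xs \<in> tuples (carrier U) (fa f)"
      then obtain n where n: "set xs \<subseteq> Cn n" using listC unfolding tuples_def by blast
      have t: "xs \<in> tuples (Cn n) (fa f)" using tup[OF xs n] .
      have fc: "fun_of U f xs \<in> Cn n" using Cclosed[of n] t unfolding closed_under_def by blast
      have "ph n (fun_of U f xs) = fun_of U f (map (ph n) xs)"
        using emb[of n] t unfolding is_emb_def is_hom_def by simp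
      then show "\<alpha> (fun_of U f xs) = fun_of U f (map \<alpha> xs)" using \<alpha>[OF fc] mapeq[OF n] by metis
    next
      fix r xs assume xs: "xs \<in> tuples (carrier U) (ra r)" and rx: "rel_of U r xs"
      then obtain n where n: "set xs \<subseteq> Cn n" using listC unfolding tuples_def by blast
      have t: "xs \<in> tuples (Cn n) (ra r)" using tup[OF xs n] .
      have "rel_of U r (map (ph n) xs)"
        using emb[of n] t rx unfolding is_emb_def is_hom_def by simp
      then show "rel_of U r (map \<alpha> xs)" using mapeq[OF n] by metis
    next
      fix r xs assume xs: "xs \<in> tuples (carrier U) (ra r)" and rx: "rel_of U r (map \<alpha> xs)"
      then obtain n where n: "set xs \<subseteq> Cn n" using listC unfolding tuples_def by blast
      have t: "xs \<in> tuples (Cn n) (ra r)" using tup[OF xs n] .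
      have "rel_of U r (map (ph n) xs)" using rx mapeq[OF n] by metis
      then show "rel_of U r xs"
        using emb[of n] t unfolding is_emb_def by simp
    next
      show "inj_on \<alpha> (carrier U)"
      proof (rule inj_onI)
        fix x y assume x: "x \<in> carrier U" and y: "y \<in> carrier U" and e: "\<alpha> x = \<alpha> y"
        obtain n where n: "set [x, y] \<subseteq> Cn n" using listC[of "[x,y]"] x y by auto
        then have xn: "x \<in> Cn n" and yn: "y \<in> Cn n" by auto
        have "ph n x = ph n y" using e \<alpha>[OF xn] \<alpha>[OF yn] by simp
        moreover have "inj_on (ph n) (Cn n)" using emb[of n] unfolding is_emb_def by simp
        ultimately show "x = y" using xn yn by (meson inj_onD)
      qed
    next
      show "\<alpha> ` carrier U = carrier U"
      proof
        show "\<alpha> ` carrier U \<subseteq> carrier U"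
        proof
          fix z assume "z \<in> \<alpha> ` carrier U"
          then obtain x where x: "x \<in> carrier U" "z = \<alpha> x" by blast
          then obtain n where n: "x \<in> Cn n" using allC by blast
          then have "ph n x \<in> carrier U" using emb[of n] unfolding is_emb_def is_hom_def by simp
          then show "z \<in> carrier U" using \<alpha>[OF n] x by simp
        qed
      next
        show "carrier U \<subseteq> \<alpha> ` carrier U"
        proof
          fix y assume "y \<in> carrier U"
          then have "y \<in> range en" using ran by simp
          then obtain n where yn: "y = en n" by blast
          then obtain c where c: "c \<in> Cn (Suc n)" "y = ph (Suc n) c"
            using step[of n] unfolding Cn_def ph_def by blast
          have "c \<in> carrier U" using Cclosed c(1) by blast
          moreover have "\<alpha> c = y" using \<alpha>[OF c(1)] c(2) by simp
          ultimately show "y \<in> \<alpha> ` carrier U" by (metis imageI)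
        qed
      qed
    qed
    moreover have "\<forall>x\<in>carrier A. \<alpha> x = i x"
    proof
      fix x assume x: "x \<in> carrier A"
      have "x \<in> Cn 0" using x st0 unfolding Cn_def s0_def by simp
      then show "\<alpha> x = i x" using \<alpha> st0 unfolding ph_def s0_def by simp
    qed
    ultimately show ?thesis unfolding is_aut_def by blast
  qed
qed

theorem proposition4p8:
  fixes fa :: "'f \<Rightarrow> nat" and ra :: "'r \<Rightarrow> nat" and U :: "('a, 'f, 'r) struct"
  assumes "is_struct fa ra U"
    and "countable (carrier U)"
    and "\<exists>u. universal_homogeneous_endo fa ra U u"
  shows "homogeneous fa ra U \<longleftrightarrow> hom_homogeneous fa ra U"
proof -
  obtain u where u: "universal_homogeneous_endo fa ra U u" using assms(3) by blast
  show ?thesis using homog_imp_hh[OF assms(1,2) u] hh_imp_homog[OF assms(1,2) u] by blast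
qed

end
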